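(* Let $\alpha,\beta,\gamma,\delta,\epsilon,\mu$ be parameters and let $$A_0=\begin{pmatrix}\alpha&\beta&\gamma\\\beta&\epsilon&\delta\\\gamma&\delta&\mu\end{pmatrix},\qquad A_1=\begin{pmatrix}\alpha_1&\beta_1&\gamma_1\\\beta_1&\epsilon_1&\delta_1\\\gamma_1&\delta_1&\mu_1\end{pmatrix},$$ with $\alpha_1=\alpha\epsilon-\beta^2$, $\beta_1=2\alpha\delta-2\beta\gamma$, $\gamma_1=\beta\delta-\gamma\epsilon$, $\epsilon_1=4\alpha\mu-4\gamma^2$, $\delta_1=2\beta\mu-2\gamma\delta$, $\mu_1=\epsilon\mu-\delta^2$. Put $\mathbf{X}=(x^2,x,1)^T$, $\mathbf{Y}=(y^2,y,1)^T$ and $I(x,y)=\dfrac{\mathbf{X}^TA_0\mathbf{Y}}{\mathbf{X}^TA_1\mathbf{Y}}$. Consider the maps $\Psi,\Psi_1:(x,y)\mapsto(\bar x,\bar y)$ given respectively by $$\Psi:\quad \bar x=y,\qquad \bar y=-\frac{2\gamma y^2+2\delta y+2\mu+x(\beta y^2+\epsilon y+\delta)}{\beta y^2+\epsilon y+\delta+2x(\alpha y^2+\beta y+\gamma)},$$ $$\Psi_1:\quad \bar x=y,\qquad \bar y=-\frac{2\gamma_1 y^2+2\delta_1 y+2\mu_1+x(\beta_1 y^2+\epsilon_1 y+\delta_1)}{\beta_1 y^2+\epsilon_1 y+\delta_1+2x(\alpha_1 y^2+\beta_1 y+\gamma_1)}.$$ Then both $\Psi$ and $\Psi_1$ preserve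 $I^2$ (i.e. $I(\bar x,\bar y)^2=I(x,y)^2$). Moreover $\Psi$ is anti measure-preserving and $\Psi_1$ is measure-preserving, both with density $m(x,y)=\left(\mathbf{X}^TA_0\mathbf{Y}\right)^{-1}$.
   Context: A map $(x,y)\mapsto(\bar x,\bar y)$ with Jacobian determinant $J=\det\frac{\partial(\bar x,\bar y)}{\partial(x,y)}$ is measure-preserving with density $m$ if $J=\dfrac{m(x,y)}{m(\bar x,\bar y)}$, and anti measure-preserving with density $m$ if $J=-\dfrac{m(x,y)}{m(\bar x,\bar y)}$. *)

theory Defs
  imports "HOL-Analysis.Analysis"
begin

definition symmat :: "real \<Rightarrow> real \<Rightarrow> real \<Rightarrow> real \<Rightarrow> real \<Rightarrow> real \<Rightarrow> real^3^3" where
  "symmat a b g d e m = vector [vector [a, b, g], vector [b, e, d], vector [g, d, m]]"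

definition quadvec :: "real \<Rightarrow> real^3" where
  "quadvec x = vector [x^2, x, 1]"

definition biquad :: "real^3^3 \<Rightarrow> real \<times> real \<Rightarrow> real" where
  "biquad A p = quadvec (fst p) \<bullet> (A *v quadvec (snd p))"

definition qrt_map :: "real \<Rightarrow> real \<Rightarrow> real \<Rightarrow> real \<Rightarrow> real \<Rightarrow> real \<Rightarrow> real \<times> real \<Rightarrow> real \<times> real" where
  "qrt_map a b g d e m p = (let x = fst p; y = snd p in
     (y, - (2*g*y^2 + 2*d*y + 2*m + x*(b*y^2 + e*y + d)) / (b*y^2 + e*y + d + 2*x*(a*y^2 + b*y + g))))"

definition qrt_den :: "real \<Rightarrow> real \<Rightarrow> real \<Rightarrow> real \<Rightarrow> real \<Rightarrow> real \<Rightarrow> real \<times> real \<Rightarrow> real" where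
  "qrt_den a b g d e m p = (let x = fst p; y = snd p in b*y^2 + e*y + d + 2*x*(a*y^2 + b*y + g))"

definition jacobian_det :: "(real \<times> real \<Rightarrow> real \<times> real) \<Rightarrow> real \<times> real \<Rightarrow> real" where
  "jacobian_det F p = (let D = frechet_derivative F (at p) in
     fst (D (1,0)) * snd (D (0,1)) - fst (D (0,1)) * snd (D (1,0)))"

definition measure_preserving_at :: "(real \<times> real \<Rightarrow> real \<times> real) \<Rightarrow> (real \<times> real \<Rightarrow> real) \<Rightarrow> real \<times> real \<Rightarrow> bool" where
  "measure_preserving_at F m p \<longleftrightarrow> F differentiable (at p) \<and> jacobian_det F p = m p / m (F p)"

definition anti_measure_preserving_at :: "(real \<times> real \<Rightarrow> real \<times> real) \<Rightarrow> (real \<times> real \<Rightarrow> real) \<Rightarrow> real \<times> real \<Rightarrow> bool" where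
  "anti_measure_preserving_at F m p \<longleftrightarrow> F differentiable (at p) \<and> jacobian_det F p = - (m p / m (F p))"


definition A1mat :: "real \<Rightarrow> real \<Rightarrow> real \<Rightarrow> real \<Rightarrow> real \<Rightarrow> real \<Rightarrow> real^3^3" where
  "A1mat a b g d e m = symmat (a*e - b^2) (2*a*d - 2*b*g) (b*d - g*e) (2*b*m - 2*g*d) (4*a*m - 4*g^2) (e*m - d^2)"

definition Psi1_map :: "real \<Rightarrow> real \<Rightarrow> real \<Rightarrow> real \<Rightarrow> real \<Rightarrow> real \<Rightarrow> real \<times> real \<Rightarrow> real \<times> real" where
  "Psi1_map a b g d e m = qrt_map (a*e - b^2) (2*a*d - 2*b*g) (b*d - g*e) (2*b*m - 2*g*d) (4*a*m - 4*g^2) (e*m - d^2)"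

definition Psi1_den :: "real \<Rightarrow> real \<Rightarrow> real \<Rightarrow> real \<Rightarrow> real \<Rightarrow> real \<Rightarrow> real \<times> real \<Rightarrow> real" where
  "Psi1_den a b g d e m = qrt_den (a*e - b^2) (2*a*d - 2*b*g) (b*d - g*e) (2*b*m - 2*g*d) (4*a*m - 4*g^2) (e*m - d^2)"

definition I_inv :: "real \<Rightarrow> real \<Rightarrow> real \<Rightarrow> real \<Rightarrow> real \<Rightarrow> real \<Rightarrow> real \<times> real \<Rightarrow> real" where
  "I_inv a b g d e m p = biquad (symmat a b g d e m) p / biquad (A1mat a b g d e m) p"

definition dens :: "real \<Rightarrow> real \<Rightarrow> real \<Rightarrow> real \<Rightarrow> real \<Rightarrow> real \<Rightarrow> real \<times> real \<Rightarrow> real" where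
  "dens a b g d e m p = inverse (biquad (symmat a b g d e m) p)"

end

theory Submission imports Defs begin

definition bq :: "real \<Rightarrow> real \<Rightarrow> real \<Rightarrow> real \<Rightarrow> real \<Rightarrow> real \<Rightarrow> real \<Rightarrow> real \<Rightarrow> real" where
  "bq a b g d e m x y = x^2*(a*y^2+b*y+g) + x*(b*y^2+e*y+d) + (g*y^2+d*y+m)"

lemma biquad_eq: "biquad (symmat a b g d e m) p = bq a b g d e m (fst p) (snd p)"
  unfolding biquad_def symmat_def quadvec_def bq_def
  by (simp add: inner_vec_def matrix_vector_mult_def sum_3 algebra_simps power2_eq_square)

lemma deriv_map:
  fixes a b g d e m :: real and p :: "real \<times> real"
  defines "x \<equiv> fst p" and "y \<equiv> snd p"
  defines "N \<equiv> 2*g*y^2 + 2*d*y + 2*m + x*(b*y^2 + e*y + d)"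
  defines "D \<equiv> b*y^2 + e*y + d + 2*x*(a*y^2 + b*y + g)"
  assumes "D \<noteq> 0"
  shows "(qrt_map a b g d e m has_derivative
     (\<lambda>h. (snd h, - (((b*y^2+e*y+d)*fst h + (4*g*y+2*d+x*(2*b*y+e))* snd h) * D
                     - N * (2*(a*y^2+b*y+g)*fst h + (2*b*y+e+2*x*(2*a*y+b))* snd h)) / D^2))) (at p)"
proof -
  have fN: "((\<lambda>q::real\<times>real. 2*g*(snd q)^2 + 2*d* snd q + 2*m + fst q*(b*(snd q)^2 + e* snd q + d)) has_derivative
      (\<lambda>h. (b*y^2+e*y+d)*fst h + (4*g*y+2*d+x*(2*b*y+e))* snd h)) (at p)"
    unfolding x_def y_def
    by (rule derivative_eq_intros refl | simp)+ (auto simp: algebra_simps)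
  have fD: "((\<lambda>q::real\<times>real. b*(snd q)^2 + e* snd q + d + 2*fst q*(a*(snd q)^2 + b* snd q + g)) has_derivative
      (\<lambda>h. 2*(a*y^2+b*y+g)*fst h + (2*b*y+e+2*x*(2*a*y+b)) * snd h)) (at p)"
    unfolding x_def y_def
    by (rule derivative_eq_intros refl | simp)+ (auto simp: algebra_simps)
  have D': "(\<lambda>q::real\<times>real. b*(snd q)^2 + e* snd q + d + 2*fst q*(a*(snd q)^2 + b* snd q + g)) p = D"
    unfolding D_def x_def y_def by simp
  have N': "(\<lambda>q::real\<times>real. 2*g*(snd q)^2 + 2*d* snd q + 2*m + fst q*(b*(snd q)^2 + e* snd q + d)) p = N"
    unfolding N_def x_def y_def by simp
  have q: "qrt_map a b g d e m = (\<lambda>q. (snd q, - ((\<lambda>q::real\<times>real. 2*g*(snd q)^2 + 2*d* snd q + 2*m + fst q*(b*(snd q)^2 + e* snd q + d)) q /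
        (\<lambda>q::real\<times>real. b*(snd q)^2 + e* snd q + d + 2*fst q*(a*(snd q)^2 + b* snd q + g)) q)))"
    by (auto simp: qrt_map_def Let_def fun_eq_iff minus_divide_left)
  have H: "(qrt_map a b g d e m has_derivative
     (\<lambda>h. (snd h, - (- N * (inverse D * (2*(a*y^2+b*y+g)*fst h + (2*b*y+e+2*x*(2*a*y+b)) * snd h) * inverse D)
        + ((b*y^2+e*y+d)*fst h + (4*g*y+2*d+x*(2*b*y+e)) * snd h) / D)))) (at p)"
    unfolding q
    apply (rule has_derivative_Pair[OF has_derivative_snd[OF has_derivative_ident]])
    apply (rule has_derivative_minus)
    apply (rule has_derivative_divide[OF fN fD, unfolded D' N'])
    using assms(5) by simp
  have eq: "(\<lambda>h. (snd h, - (- N * (inverse D * (2*(a*y^2+b*y+g)*fst h + (2*b*y+e+2*x*(2*a*y+b)) * snd h) * inverse D)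
        + ((b*y^2+e*y+d)*fst h + (4*g*y+2*d+x*(2*b*y+e)) * snd h) / D))) =
     (\<lambda>h. (snd h, - (((b*y^2+e*y+d)*fst h + (4*g*y+2*d+x*(2*b*y+e))* snd h) * D
                     - N * (2*(a*y^2+b*y+g)*fst h + (2*b*y+e+2*x*(2*a*y+b))* snd h)) / D^2))"
    using assms(5) by (intro ext) (simp add: field_simps power2_eq_square)
  show ?thesis using H unfolding eq .
qed


lemma jac_map:
  fixes a b g d e m :: real and p :: "real \<times> real"
  defines "x \<equiv> fst p" and "y \<equiv> snd p"
  defines "N \<equiv> 2*g*y^2 + 2*d*y + 2*m + x*(b*y^2 + e*y + d)"
  defines "D \<equiv> b*y^2 + e*y + d + 2*x*(a*y^2 + b*y + g)"
  assumes "D \<noteq> 0"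
  shows "qrt_map a b g d e m differentiable (at p)"
    and "jacobian_det (qrt_map a b g d e m) p =
          ((b*y^2+e*y+d)^2 - 4*(g*y^2+d*y+m)*(a*y^2+b*y+g)) / D^2"
proof -
  note H = deriv_map[where a=a and b=b and g=g and d=d and e=e and m=m and p=p, folded x_def y_def, folded N_def D_def, OF assms(5)]
  show "qrt_map a b g d e m differentiable (at p)" using H by (auto simp: differentiable_def)
  show "jacobian_det (qrt_map a b g d e m) p =
          ((b*y^2+e*y+d)^2 - 4*(g*y^2+d*y+m)*(a*y^2+b*y+g)) / D^2"
  proof -
    have 1: "jacobian_det (qrt_map a b g d e m) p = ((b*y^2+e*y+d) * D - N * (2*(a*y^2+b*y+g))) / D^2"
      unfolding jacobian_det_def Let_def frechet_derivative_at[OF H, symmetric]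
      by (simp add: minus_divide_left)
    have 2: "(b*y^2+e*y+d) * D - N * (2*(a*y^2+b*y+g)) = (b*y^2+e*y+d)^2 - 4*(g*y^2+d*y+m)*(a*y^2+b*y+g)"
      unfolding D_def N_def by algebra
    show ?thesis using 1 2 by simp
  qed
qed

lemma subst_map:
  fixes a b g d e m :: real and p :: "real \<times> real"
  defines "x \<equiv> fst p" and "y \<equiv> snd p"
  defines "N \<equiv> 2*g*y^2 + 2*d*y + 2*m + x*(b*y^2 + e*y + d)"
  defines "D \<equiv> b*y^2 + e*y + d + 2*x*(a*y^2 + b*y + g)"
  assumes "D \<noteq> 0"
  shows "bq a' b' g' d' e' m' (fst (qrt_map a b g d e m p)) (snd (qrt_map a b g d e m p)) * D^2
     = (a'*y^2+b'*y+g')*N^2 - (b'*y^2+e'*y+d')*N*D + (g'*y^2+d'*y+m')*D^2"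
proof -
  have "qrt_map a b g d e m p = (y, - N / D)"
    unfolding qrt_map_def Let_def N_def D_def x_def y_def by simp
  then show ?thesis using assms(5) unfolding bq_def
    by (simp add: field_simps power2_eq_square)
qed

lemma id_self:
  fixes a b g d e m x y :: real
  shows "(a*y^2+b*y+g)*(2*g*y^2 + 2*d*y + 2*m + x*(b*y^2 + e*y + d))^2
     - (b*y^2+e*y+d)*(2*g*y^2 + 2*d*y + 2*m + x*(b*y^2 + e*y + d))*(b*y^2 + e*y + d + 2*x*(a*y^2 + b*y + g))
     + (g*y^2+d*y+m)*(b*y^2 + e*y + d + 2*x*(a*y^2 + b*y + g))^2
   = - ((b*y^2+e*y+d)^2 - 4*(g*y^2+d*y+m)*(a*y^2+b*y+g)) * bq a b g d e m x y"
  unfolding bq_def by algebra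

lemma id_crossA:
  fixes a b g d e m x y :: real
  defines "a1 \<equiv> a*e - b^2" and "b1 \<equiv> 2*a*d - 2*b*g" and "g1 \<equiv> b*d - g*e"
      and "d1 \<equiv> 2*b*m - 2*g*d" and "e1 \<equiv> 4*a*m - 4*g^2" and "m1 \<equiv> e*m - d^2"
  shows "(a1*y^2+b1*y+g1)*(2*g*y^2 + 2*d*y + 2*m + x*(b*y^2 + e*y + d))^2
     - (b1*y^2+e1*y+d1)*(2*g*y^2 + 2*d*y + 2*m + x*(b*y^2 + e*y + d))*(b*y^2 + e*y + d + 2*x*(a*y^2 + b*y + g))
     + (g1*y^2+d1*y+m1)*(b*y^2 + e*y + d + 2*x*(a*y^2 + b*y + g))^2
   = ((b*y^2+e*y+d)^2 - 4*(g*y^2+d*y+m)*(a*y^2+b*y+g)) * bq a1 b1 g1 d1 e1 m1 x y"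
  unfolding bq_def assms by algebra

lemma id_crossB:
  fixes a b g d e m x y :: real
  defines "a1 \<equiv> a*e - b^2" and "b1 \<equiv> 2*a*d - 2*b*g" and "g1 \<equiv> b*d - g*e"
      and "d1 \<equiv> 2*b*m - 2*g*d" and "e1 \<equiv> 4*a*m - 4*g^2" and "m1 \<equiv> e*m - d^2"
  shows "(a*y^2+b*y+g)*(2*g1*y^2 + 2*d1*y + 2*m1 + x*(b1*y^2 + e1*y + d1))^2
     - (b*y^2+e*y+d)*(2*g1*y^2 + 2*d1*y + 2*m1 + x*(b1*y^2 + e1*y + d1))*(b1*y^2 + e1*y + d1 + 2*x*(a1*y^2 + b1*y + g1))
     + (g*y^2+d*y+m)*(b1*y^2 + e1*y + d1 + 2*x*(a1*y^2 + b1*y + g1))^2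
   = ((b1*y^2+e1*y+d1)^2 - 4*(g1*y^2+d1*y+m1)*(a1*y^2+b1*y+g1)) * bq a b g d e m x y"
  unfolding bq_def assms by algebra


lemma ratio_sq:
  fixes u v U V D k :: real
  assumes "u * D^2 = - k * U" "v * D^2 = k * V" "D \<noteq> 0" "v \<noteq> 0"
  shows "(u / v)^2 = (U / V)^2"
proof -
  have k: "k \<noteq> 0" using assms(2-4) by auto
  have u: "u = - k * U / D^2" and v: "v = k * V / D^2" using assms(1-3) by (simp_all add: field_simps)
  have V: "V \<noteq> 0" using assms(4) v by auto
  show ?thesis unfolding u v using k assms(3) V by (simp add: field_simps power2_eq_square)
qed

lemma ratio_sq2:
  fixes u v U V D k :: real
  assumes "u * D^2 = k * U" "v * D^2 = - k * V" "D \<noteq> 0" "v \<noteq> 0"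
  shows "(u / v)^2 = (U / V)^2"
  using ratio_sq[of u D "-k" U v V] assms by simp

lemma jac_anti:
  fixes J u U D k :: real
  assumes "J = k / D^2" "u * D^2 = - k * U" "D \<noteq> 0" "U \<noteq> 0"
  shows "J = - (inverse U / inverse u)"
proof -
  have k: "k = J*D^2" using assms(1,3) by simp
  have "u*D^2 = (- (J*U))*D^2" using assms(2) k by (simp add: algebra_simps)
  hence u: "u = - (J*U)" using assms(3) by (metis mult_right_cancel power_not_zero)
  show ?thesis
  proof (cases "u = 0")
    case True then show ?thesis using u assms(4) by simp
  next
    case False then show ?thesis using u assms(4) by (simp add: field_simps)
  qed
qed

lemma jac_pres:
  fixes J u U D k :: real
  assumes "J = k / D^2" "u * D^2 = k * U" "D \<noteq> 0" "U \<noteq> 0"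
  shows "J = inverse U / inverse u"
proof -
  have k: "k = J*D^2" using assms(1,3) by simp
  have "u*D^2 = (J*U)*D^2" using assms(2) k by (simp add: algebra_simps)
  hence u: "u = J*U" using assms(3) by simp
  show ?thesis
  proof (cases "u = 0")
    case True then show ?thesis using u assms(4) by simp
  next
    case False then show ?thesis using u assms(4) by (simp add: field_simps)
  qed
qed

lemma A1_sym: "A1mat a b g d e m = symmat (a*e - b^2) (2*a*d - 2*b*g) (b*d - g*e) (2*b*m - 2*g*d) (4*a*m - 4*g^2) (e*m - d^2)"
  by (simp add: A1mat_def)

lemma den_eq: "qrt_den a b g d e m p = b*(snd p)^2 + e* snd p + d + 2*fst p*(a*(snd p)^2 + b* snd p + g)"
  by (simp add: qrt_den_def Let_def)

lemma facts0:
  fixes a b g d e m :: real and p :: "real \<times> real"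
  assumes "qrt_den a b g d e m p \<noteq> 0"
  defines "a1 \<equiv> a*e - b^2" and "b1 \<equiv> 2*a*d - 2*b*g" and "g1 \<equiv> b*d - g*e"
      and "d1 \<equiv> 2*b*m - 2*g*d" and "e1 \<equiv> 4*a*m - 4*g^2" and "m1 \<equiv> e*m - d^2"
  shows "biquad (symmat a b g d e m) (qrt_map a b g d e m p) * (qrt_den a b g d e m p)^2
          = - ((b*(snd p)^2+e* snd p+d)^2 - 4*(g*(snd p)^2+d* snd p+m)*(a*(snd p)^2+b* snd p+g)) * biquad (symmat a b g d e m) p"
    and "biquad (A1mat a b g d e m) (qrt_map a b g d e m p) * (qrt_den a b g d e m p)^2
          = ((b*(snd p)^2+e* snd p+d)^2 - 4*(g*(snd p)^2+d* snd p+m)*(a*(snd p)^2+b* snd p+g)) * biquad (A1mat a b g d e m) p"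
    and "jacobian_det (qrt_map a b g d e m) p = 
           ((b*(snd p)^2+e* snd p+d)^2 - 4*(g*(snd p)^2+d* snd p+m)*(a*(snd p)^2+b* snd p+g)) / (qrt_den a b g d e m p)^2"
    and "qrt_map a b g d e m differentiable (at p)"
proof -
  have D: "b*(snd p)^2 + e* snd p + d + 2*fst p*(a*(snd p)^2 + b* snd p + g) \<noteq> 0" using assms(1) by (simp add: den_eq)
  show "biquad (symmat a b g d e m) (qrt_map a b g d e m p) * (qrt_den a b g d e m p)^2
          = - ((b*(snd p)^2+e* snd p+d)^2 - 4*(g*(snd p)^2+d* snd p+m)*(a*(snd p)^2+b* snd p+g)) * biquad (symmat a b g d e m) p"
    unfolding biquad_eq den_eq subst_map[OF D] by (rule id_self)
  show "biquad (A1mat a b g d e m) (qrt_map a b g d e m p) * (qrt_den a b g d e m p)^2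
          = ((b*(snd p)^2+e* snd p+d)^2 - 4*(g*(snd p)^2+d* snd p+m)*(a*(snd p)^2+b* snd p+g)) * biquad (A1mat a b g d e m) p"
    unfolding A1_sym biquad_eq den_eq subst_map[OF D] by (rule id_crossA)
  show "jacobian_det (qrt_map a b g d e m) p = 
           ((b*(snd p)^2+e* snd p+d)^2 - 4*(g*(snd p)^2+d* snd p+m)*(a*(snd p)^2+b* snd p+g)) / (qrt_den a b g d e m p)^2"
    unfolding den_eq by (rule jac_map(2)[OF D])
  show "qrt_map a b g d e m differentiable (at p)" by (rule jac_map(1)[OF D])
qed


lemma facts1:
  fixes a b g d e m :: real and p :: "real \<times> real"
  assumes "Psi1_den a b g d e m p \<noteq> 0"
  defines "a1 \<equiv> a*e - b^2" and "b1 \<equiv> 2*a*d - 2*b*g" and "g1 \<equiv> b*d - g*e"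
      and "d1 \<equiv> 2*b*m - 2*g*d" and "e1 \<equiv> 4*a*m - 4*g^2" and "m1 \<equiv> e*m - d^2"
  shows "biquad (A1mat a b g d e m) (Psi1_map a b g d e m p) * (Psi1_den a b g d e m p)^2
          = - ((b1*(snd p)^2+e1 * snd p+d1)^2 - 4*(g1*(snd p)^2+d1 * snd p+m1)*(a1*(snd p)^2+b1 * snd p+g1)) * biquad (A1mat a b g d e m) p"
    and "biquad (symmat a b g d e m) (Psi1_map a b g d e m p) * (Psi1_den a b g d e m p)^2
          = ((b1*(snd p)^2+e1 * snd p+d1)^2 - 4*(g1*(snd p)^2+d1 * snd p+m1)*(a1*(snd p)^2+b1 * snd p+g1)) * biquad (symmat a b g d e m) p"
    and "jacobian_det (Psi1_map a b g d e m) p = 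
           ((b1*(snd p)^2+e1 * snd p+d1)^2 - 4*(g1*(snd p)^2+d1 * snd p+m1)*(a1*(snd p)^2+b1 * snd p+g1)) / (Psi1_den a b g d e m p)^2"
    and "Psi1_map a b g d e m differentiable (at p)"
proof -
  have M: "Psi1_map a b g d e m = qrt_map a1 b1 g1 d1 e1 m1" unfolding Psi1_map_def assms ..
  have DD: "Psi1_den a b g d e m p = qrt_den a1 b1 g1 d1 e1 m1 p" unfolding Psi1_den_def assms ..
  have A: "A1mat a b g d e m = symmat a1 b1 g1 d1 e1 m1" unfolding A1mat_def assms ..
  have D: "b1*(snd p)^2 + e1 * snd p + d1 + 2*fst p*(a1*(snd p)^2 + b1 * snd p + g1) \<noteq> 0"
    using assms(1) by (simp add: den_eq DD)
  show "biquad (A1mat a b g d e m) (Psi1_map a b g d e m p) * (Psi1_den a b g d e m p)^2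
          = - ((b1*(snd p)^2+e1 * snd p+d1)^2 - 4*(g1*(snd p)^2+d1 * snd p+m1)*(a1*(snd p)^2+b1 * snd p+g1)) * biquad (A1mat a b g d e m) p"
    unfolding M DD A biquad_eq den_eq subst_map[OF D] by (rule id_self)
  show "biquad (symmat a b g d e m) (Psi1_map a b g d e m p) * (Psi1_den a b g d e m p)^2
          = ((b1*(snd p)^2+e1 * snd p+d1)^2 - 4*(g1*(snd p)^2+d1 * snd p+m1)*(a1*(snd p)^2+b1 * snd p+g1)) * biquad (symmat a b g d e m) p"
    unfolding M DD biquad_eq den_eq subst_map[OF D] unfolding assms by (rule id_crossB)
  show "jacobian_det (Psi1_map a b g d e m) p = 
           ((b1*(snd p)^2+e1 * snd p+d1)^2 - 4*(g1*(snd p)^2+d1 * snd p+m1)*(a1*(snd p)^2+b1 * snd p+g1)) / (Psi1_den a b g d e m p)^2"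
    unfolding M DD den_eq by (rule jac_map(2)[OF D])
  show "Psi1_map a b g d e m differentiable (at p)" unfolding M by (rule jac_map(1)[OF D])
qed

theorem corollary4:
  fixes \<alpha> \<beta> \<gamma> \<delta> \<epsilon> \<mu> :: real
  shows
    "(\<forall>p. qrt_den \<alpha> \<beta> \<gamma> \<delta> \<epsilon> \<mu> p \<noteq> 0
          \<and> biquad (A1mat \<alpha> \<beta> \<gamma> \<delta> \<epsilon> \<mu>) p \<noteq> 0
          \<and> biquad (A1mat \<alpha> \<beta> \<gamma> \<delta> \<epsilon> \<mu>) (qrt_map \<alpha> \<beta> \<gamma> \<delta> \<epsilon> \<mu> p) \<noteq> 0
        \<longrightarrow> I_inv \<alpha> \<beta> \<gamma> \<delta> \<epsilon> \<mu> (qrt_map \<alpha> \<beta> \<gamma> \<delta> \<epsilon> \<mu> p) ^ 2 = I_inv \<alpha> \<beta> \<gamma> \<delta> \<epsilon> \<mu> p ^ 2)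
   \<and> (\<forall>p. Psi1_den \<alpha> \<beta> \<gamma> \<delta> \<epsilon> \<mu> p \<noteq> 0
          \<and> biquad (A1mat \<alpha> \<beta> \<gamma> \<delta> \<epsilon> \<mu>) p \<noteq> 0
          \<and> biquad (A1mat \<alpha> \<beta> \<gamma> \<delta> \<epsilon> \<mu>) (Psi1_map \<alpha> \<beta> \<gamma> \<delta> \<epsilon> \<mu> p) \<noteq> 0
        \<longrightarrow> I_inv \<alpha> \<beta> \<gamma> \<delta> \<epsilon> \<mu> (Psi1_map \<alpha> \<beta> \<gamma> \<delta> \<epsilon> \<mu> p) ^ 2 = I_inv \<alpha> \<beta> \<gamma> \<delta> \<epsilon> \<mu> p ^ 2)
   \<and> (\<forall>p. qrt_den \<alpha> \<beta> \<gamma> \<delta> \<epsilon> \<mu> p \<noteq> 0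
          \<and> biquad (symmat \<alpha> \<beta> \<gamma> \<delta> \<epsilon> \<mu>) p \<noteq> 0
          \<and> biquad (symmat \<alpha> \<beta> \<gamma> \<delta> \<epsilon> \<mu>) (qrt_map \<alpha> \<beta> \<gamma> \<delta> \<epsilon> \<mu> p) \<noteq> 0
        \<longrightarrow> anti_measure_preserving_at (qrt_map \<alpha> \<beta> \<gamma> \<delta> \<epsilon> \<mu>) (dens \<alpha> \<beta> \<gamma> \<delta> \<epsilon> \<mu>) p)
   \<and> (\<forall>p. Psi1_den \<alpha> \<beta> \<gamma> \<delta> \<epsilon> \<mu> p \<noteq> 0
          \<and> biquad (symmat \<alpha> \<beta> \<gamma> \<delta> \<epsilon> \<mu>) p \<noteq> 0
          \<and> biquad (symmat \<alpha> \<beta> \<gamma> \<delta> \<epsilon> \<mu>) (Psi1_map \<alpha> \<beta> \<gamma> \<delta> \<epsilon> \<mu> p) \<noteq> 0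
        \<longrightarrow> measure_preserving_at (Psi1_map \<alpha> \<beta> \<gamma> \<delta> \<epsilon> \<mu>) (dens \<alpha> \<beta> \<gamma> \<delta> \<epsilon> \<mu>) p)"
proof (intro conjI allI impI)
  fix p
  let ?a = \<alpha> and ?b = \<beta> and ?g = \<gamma> and ?d = \<delta> and ?e = \<epsilon> and ?m = \<mu>
  {
    assume h: "qrt_den \<alpha> \<beta> \<gamma> \<delta> \<epsilon> \<mu> p \<noteq> 0
          \<and> biquad (A1mat \<alpha> \<beta> \<gamma> \<delta> \<epsilon> \<mu>) p \<noteq> 0
          \<and> biquad (A1mat \<alpha> \<beta> \<gamma> \<delta> \<epsilon> \<mu>) (qrt_map \<alpha> \<beta> \<gamma> \<delta> \<epsilon> \<mu> p) \<noteq> 0"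
    show "I_inv \<alpha> \<beta> \<gamma> \<delta> \<epsilon> \<mu> (qrt_map \<alpha> \<beta> \<gamma> \<delta> \<epsilon> \<mu> p) ^ 2 = I_inv \<alpha> \<beta> \<gamma> \<delta> \<epsilon> \<mu> p ^ 2"
      unfolding I_inv_def
      using ratio_sq[OF facts0(1)[of \<alpha> \<beta> \<gamma> \<delta> \<epsilon> \<mu> p] facts0(2)[of \<alpha> \<beta> \<gamma> \<delta> \<epsilon> \<mu> p]] h by simp
  }
  {
    assume h: "Psi1_den \<alpha> \<beta> \<gamma> \<delta> \<epsilon> \<mu> p \<noteq> 0
          \<and> biquad (A1mat \<alpha> \<beta> \<gamma> \<delta> \<epsilon> \<mu>) p \<noteq> 0
          \<and> biquad (A1mat \<alpha> \<beta> \<gamma> \<delta> \<epsilon> \<mu>) (Psi1_map \<alpha> \<beta> \<gamma> \<delta> \<epsilon> \<mu> p) \<noteq> 0"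
    show "I_inv \<alpha> \<beta> \<gamma> \<delta> \<epsilon> \<mu> (Psi1_map \<alpha> \<beta> \<gamma> \<delta> \<epsilon> \<mu> p) ^ 2 = I_inv \<alpha> \<beta> \<gamma> \<delta> \<epsilon> \<mu> p ^ 2"
      unfolding I_inv_def
      using ratio_sq2[OF facts1(2)[of \<alpha> \<beta> \<gamma> \<delta> \<epsilon> \<mu> p] facts1(1)[of \<alpha> \<beta> \<gamma> \<delta> \<epsilon> \<mu> p]] h by simp
  }
  {
    assume h: "qrt_den \<alpha> \<beta> \<gamma> \<delta> \<epsilon> \<mu> p \<noteq> 0
          \<and> biquad (symmat \<alpha> \<beta> \<gamma> \<delta> \<epsilon> \<mu>) p \<noteq> 0
          \<and> biquad (symmat \<alpha> \<beta> \<gamma> \<delta> \<epsilon> \<mu>) (qrt_map \<alpha> \<beta> \<gamma> \<delta> \<epsilon> \<mu> p) \<noteq> 0"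
    show "anti_measure_preserving_at (qrt_map \<alpha> \<beta> \<gamma> \<delta> \<epsilon> \<mu>) (dens \<alpha> \<beta> \<gamma> \<delta> \<epsilon> \<mu>) p"
      unfolding anti_measure_preserving_at_def dens_def
      using jac_anti[OF facts0(3)[of \<alpha> \<beta> \<gamma> \<delta> \<epsilon> \<mu> p] facts0(1)[of \<alpha> \<beta> \<gamma> \<delta> \<epsilon> \<mu> p]] facts0(4)[of \<alpha> \<beta> \<gamma> \<delta> \<epsilon> \<mu> p] h by simp
  }
  {
    assume h: "Psi1_den \<alpha> \<beta> \<gamma> \<delta> \<epsilon> \<mu> p \<noteq> 0
          \<and> biquad (symmat \<alpha> \<beta> \<gamma> \<delta> \<epsilon> \<mu>) p \<noteq> 0
          \<and> biquad (symmat \<alpha> \<beta> \<gamma> \<delta> \<epsilon> \<mu>) (Psi1_map \<alpha> \<beta> \<gamma> \<delta> \<epsilon> \<mu> p) \<noteq> 0"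
    show "measure_preserving_at (Psi1_map \<alpha> \<beta> \<gamma> \<delta> \<epsilon> \<mu>) (dens \<alpha> \<beta> \<gamma> \<delta> \<epsilon> \<mu>) p"
      unfolding measure_preserving_at_def dens_def
      using jac_pres[OF facts1(3)[of \<alpha> \<beta> \<gamma> \<delta> \<epsilon> \<mu> p] facts1(2)[of \<alpha> \<beta> \<gamma> \<delta> \<epsilon> \<mu> p]] facts1(4)[of \<alpha> \<beta> \<gamma> \<delta> \<epsilon> \<mu> p] h by simp
  }
qed


end
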